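(* Let the switch times returned by Algorithm 1 (described in the context) be $(t_k,t_{k-1},\dots,t_1)$ with $t_k<\dots<t_1$. Then for any feasible switch time sequence $(t'_{k'},t'_{k'-1},\dots,t'_1)$ we have $t_i\le t'_i$ for all $i$ with $1\le i\le\min(k,k')$.
   Context: Let $\mathcal{S}=\{s^{(1)},\dots,s^{(n)}\}$ and $\mathcal{A}=\{a^{(1)},\dots,a^{(m)}\}$ be finite sets, $\mathcal{T}:\mathcal{S}\times\mathcal{A}\to\Delta(\mathcal{S})$ a Markov transition kernel, $\gamma\in[0,1]$, and $T\ge1$ an integer horizon. Let $\pi^{\mathrm{E}}=(\pi^{\mathrm{E}}_t)_{t=0}^{T-1}$ be a time-varying policy with each $\pi^{\mathrm{E}}_t(\cdot|s)$ a probability distribution on $\mathcal{A}$ and $\pi^{\mathrm{E}}_t(a|s)\in(0,1]$. For $k=1,\dots,m$ let $P_{a^{(k)}}\in\mathbb{R}^{n\times n}$ have $(i,j)$ entry $\mathcal{T}(s^{(j)}|s^{(i)},a^{(k)})$, $\mathbf{P}=\begin{bmatrix}P_{a^{(1)}}^\top&\cdots&P_{a^{(m)}}^\top\end{bmatrix}^\top\in\mathbb{R}^{mn\times n}$, $\mathbf{E}=\mathbf{1}_m\otimes\mathbf{I}_n$. For each $t$ let $\pi^{\log}_t\in\mathbb{R}^{mn}$ have entry $\log\pi^{\mathrm{E}}_t(a^{(k)}|s^{(i)})$ in position $(k-1)n+i$. Define $\mathcal{R}^{\mathrm{E}}$ as the set of pairs $(r,\nu)$, $r=(r_0,\dots,r_{T-1})$,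 $r_t\in\mathbb{R}^{mn}$, $\nu=(\nu_0,\dots,\nu_{T-1})$, $\nu_t\in\mathbb{R}^n$, such that $r_t-\mathbf{E}\nu_t+\gamma\mathbf{P}\nu_{t+1}=\pi^{\log}_t$ for $0\le t\le T-1$, with $\nu_T:=0$. A feasible switch time sequence is a sequence of integers $T>t'_1>t'_2>\dots>t'_{k'}>0$ such that, with $t'_0=T$ and $t'_{k'+1}=0$, there exists $(r,\nu)\in\mathcal{R}^{\mathrm{E}}$ with $r_t$ constant for $t$ in each interval $t'_{i+1}\le t<t'_i$, $i=0,\dots,k'$. For integers $0\le i<j\le T$ and $\nu_o\in\mathbb{R}^n$, let $\mathcal{R}^{\mathrm{inv}}_{i:j}(\nu_o)$ be the set of tuples $(\bar r,\nu_i,\dots,\nu_{j-1})$ with $\bar r\in\mathbb{R}^{mn}$, $\nu_l\in\mathbb{R}^n$, such that $\bar r-\mathbf{E}\nu_l+\gamma\mathbf{P}\nu_{l+1}=\pi^{\log}_l$ for $l=i,\dots,j-1$, where $\nu_j:=\nu_o$. By convention $\mathcal{R}^{\mathrm{inv}}_{-1:j}(\nu_o)=\emptyset$. Algorithm 1 (Greedy Interval Partitioning), input $T,\mathbf{P},\pi^{\mathrm{E}}$: set $Z\leftarrow()$, $R\leftarrow()$, $V_t\leftarrow0\in\mathbb{R}^n$ for $0\le t\le T$; $l\leftarrow-1$, $u\leftarrow T$, $j\leftarrow T-1$, $\tau\leftarrow T$. While $j\ge0$: if $\mathcal{R}^{\mathrm{inv}}_{j:\tau}(V_\tau)\ne\emptyset$,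 set $u\leftarrow j$ and pick some $(\bar r,\bar\nu)\in\mathcal{R}^{\mathrm{inv}}_{j:\tau}(V_\tau)$; otherwise set $l\leftarrow j$, and if moreover $u=l+1$, prepend $u$ to $Z$ and $\bar r$ to $R$, set $V_t\leftarrow\bar\nu_t$ for $t\in[u,\tau-1]$, $\tau\leftarrow u$, $l\leftarrow-1$. In either case then set $j\leftarrow\lfloor(l+u)/2\rfloor$. After the loop, prepend $\bar r$ to $R$, set $V_t\leftarrow\bar\nu_t$ for $t\in[0,\tau-1]$, and return $Z$ (switch times) and $R$. *)

theory Defs
  imports Complex_Main
begin

text \<open>The kernel is P s a s' = T(s' | s, a). A vector in R^{mn} indexed by (k,i) is a
  function 's => 'a => real; a vector in R^n is a function 's => real.
  Entry (a,s) of  r - E nu_t + gamma P nu_{t+1}  is computed by bellman_res.\<close>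

definition bellman_res ::
  "('s::finite \<Rightarrow> 'a \<Rightarrow> 's \<Rightarrow> real) \<Rightarrow> real \<Rightarrow> ('s \<Rightarrow> 'a \<Rightarrow> real) \<Rightarrow> ('s \<Rightarrow> real) \<Rightarrow> ('s \<Rightarrow> real)
    \<Rightarrow> 's \<Rightarrow> 'a \<Rightarrow> real" where
  "bellman_res P \<gamma> rt nut nut1 s a = rt s a - nut s + \<gamma> * (\<Sum>s'\<in>UNIV. P s a s' * nut1 s')"

text \<open>The set R^E (nu_T := 0 is imposed as nu T = 0).\<close>
definition RE ::
  "('s::finite \<Rightarrow> 'a \<Rightarrow> 's \<Rightarrow> real) \<Rightarrow> real \<Rightarrow> nat \<Rightarrow> (nat \<Rightarrow> 's \<Rightarrow> 'a \<Rightarrow> real)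
    \<Rightarrow> ((nat \<Rightarrow> 's \<Rightarrow> 'a \<Rightarrow> real) \<times> (nat \<Rightarrow> 's \<Rightarrow> real)) set" where
  "RE P \<gamma> T \<pi> = {(r, \<nu>). \<nu> T = (\<lambda>_. 0) \<and>
     (\<forall>t<T. \<forall>s a. bellman_res P \<gamma> (r t) (\<nu> t) (\<nu> (Suc t)) s a = ln (\<pi> t s a))}"

text \<open>R^inv_{i:j}(nu_o): only the components nu_i..nu_{j-1} of the second entry matter;
  nu_j is replaced by nu_o.\<close>
definition Rinv ::
  "('s::finite \<Rightarrow> 'a \<Rightarrow> 's \<Rightarrow> real) \<Rightarrow> real \<Rightarrow> (nat \<Rightarrow> 's \<Rightarrow> 'a \<Rightarrow> real) \<Rightarrow> nat \<Rightarrow> nat \<Rightarrow> ('s \<Rightarrow> real)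
    \<Rightarrow> (('s \<Rightarrow> 'a \<Rightarrow> real) \<times> (nat \<Rightarrow> 's \<Rightarrow> real)) set" where
  "Rinv P \<gamma> \<pi> i j nuo = {(rb, \<nu>). \<forall>l. i \<le> l \<and> l < j \<longrightarrow>
     (\<forall>s a. bellman_res P \<gamma> rb (\<nu> l) (if Suc l = j then nuo else \<nu> (Suc l)) s a = ln (\<pi> l s a))}"

text \<open>Feasible switch time sequence T > t' 1 > ... > t' k' > 0 (indices 1..k').\<close>
definition feasible_switch ::
  "('s::finite \<Rightarrow> 'a \<Rightarrow> 's \<Rightarrow> real) \<Rightarrow> real \<Rightarrow> nat \<Rightarrow> (nat \<Rightarrow> 's \<Rightarrow> 'a \<Rightarrow> real)
    \<Rightarrow> nat \<Rightarrow> (nat \<Rightarrow> nat) \<Rightarrow> bool" where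
  "feasible_switch P \<gamma> T \<pi> k' t' \<longleftrightarrow>
     (\<forall>i\<in>{1..k'}. 0 < t' i \<and> t' i < T) \<and>
     (\<forall>i. 1 \<le> i \<and> i < k' \<longrightarrow> t' (Suc i) < t' i) \<and>
     (let ext = (\<lambda>i. if i = 0 then T else if i = Suc k' then 0 else t' i) in
      \<exists>r \<nu>. (r, \<nu>) \<in> RE P \<gamma> T \<pi> \<and>
        (\<forall>i\<le>k'. \<forall>t s. ext (Suc i) \<le> t \<and> t < ext i \<and> ext (Suc i) \<le> s \<and> s < ext i
            \<longrightarrow> r t = r s))"

text \<open>State of Algorithm 1 (Greedy Interval Partitioning). l and j are integers
  (l may be -1); rbar / nubar hold the most recently picked element.\<close>
record ('s, 'a) gip_state =
  gZ :: "nat list"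
  gR :: "('s \<Rightarrow> 'a \<Rightarrow> real) list"
  gV :: "nat \<Rightarrow> 's \<Rightarrow> real"
  gl :: int
  gu :: nat
  gj :: int
  gtau :: nat
  grbar :: "'s \<Rightarrow> 'a \<Rightarrow> real"
  gnubar :: "nat \<Rightarrow> 's \<Rightarrow> real"

definition gip_init :: "nat \<Rightarrow> ('s, 'a) gip_state" where
  "gip_init T = \<lparr> gZ = [], gR = [], gV = (\<lambda>_ _. 0), gl = -1, gu = T, gj = int T - 1,
      gtau = T, grbar = (\<lambda>_ _. 0), gnubar = (\<lambda>_ _. 0) \<rparr>"

text \<open>One iteration of the while loop (body executed only when j \<ge> 0);
  the choice of (rbar, nubar) is nondeterministic.\<close>
inductive gip_step ::
  "('s::finite \<Rightarrow> 'a \<Rightarrow> 's \<Rightarrow> real) \<Rightarrow> real \<Rightarrow> (nat \<Rightarrow> 's \<Rightarrow> 'a \<Rightarrow> real)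
    \<Rightarrow> ('s, 'a) gip_state \<Rightarrow> ('s, 'a) gip_state \<Rightarrow> bool"
  for P \<gamma> \<pi> where
  found: "gj st \<ge> 0 \<Longrightarrow> (rb, nb) \<in> Rinv P \<gamma> \<pi> (nat (gj st)) (gtau st) (gV st (gtau st)) \<Longrightarrow>
    gip_step P \<gamma> \<pi> st (st\<lparr> gu := nat (gj st), grbar := rb, gnubar := nb,
                          gj := (gl st + gj st) div 2 \<rparr>)"
| switch: "gj st \<ge> 0 \<Longrightarrow> Rinv P \<gamma> \<pi> (nat (gj st)) (gtau st) (gV st (gtau st)) = {} \<Longrightarrow>
    int (gu st) = gj st + 1 \<Longrightarrow>
    gip_step P \<gamma> \<pi> st (st\<lparr> gZ := gu st # gZ st, gR := grbar st # gR st,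
        gV := (\<lambda>t. if gu st \<le> t \<and> t < gtau st then gnubar st t else gV st t),
        gtau := gu st, gl := -1, gj := (-1 + int (gu st)) div 2 \<rparr>)"
| noswitch: "gj st \<ge> 0 \<Longrightarrow> Rinv P \<gamma> \<pi> (nat (gj st)) (gtau st) (gV st (gtau st)) = {} \<Longrightarrow>
    int (gu st) \<noteq> gj st + 1 \<Longrightarrow>
    gip_step P \<gamma> \<pi> st (st\<lparr> gl := gj st, gj := (gj st + int (gu st)) div 2 \<rparr>)"

text \<open>Z is a possible list of switch times returned by Algorithm 1 (the final
  post-loop updates do not change Z). Z = [t_k, ..., t_1].\<close>
definition gip_output ::
  "('s::finite \<Rightarrow> 'a \<Rightarrow> 's \<Rightarrow> real) \<Rightarrow> real \<Rightarrow> nat \<Rightarrow> (nat \<Rightarrow> 's \<Rightarrow> 'a \<Rightarrow> real) \<Rightarrow> nat list \<Rightarrow> bool" where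
  "gip_output P \<gamma> T \<pi> Z \<longleftrightarrow>
     (\<exists>st. (gip_step P \<gamma> \<pi>)\<^sup>*\<^sup>* (gip_init T) st \<and> gj st < 0 \<and> Z = gZ st)"

end

theory Submission
  imports Defs
begin

definition NN :: "('s::finite \<Rightarrow> 'a \<Rightarrow> 's \<Rightarrow> real) \<Rightarrow> real \<Rightarrow> (nat \<Rightarrow> 's \<Rightarrow> 'a \<Rightarrow> real) \<Rightarrow> nat \<Rightarrow> nat \<Rightarrow> bool"
  where "NN P \<gamma> \<pi> i j \<longleftrightarrow> Rinv P \<gamma> \<pi> i j (\<lambda>_. 0) \<noteq> {}"

lemma Rinv_shift:
  assumes "(rb, nu) \<in> Rinv P \<gamma> \<pi> i j nuo"
  shows "(\<lambda>s a. rb s a + d s - \<gamma> * (\<Sum>s'\<in>UNIV. P s a s' * d s'), \<lambda>l s. nu l s + d s)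
     \<in> Rinv P \<gamma> \<pi> i j (\<lambda>s. nuo s + d s)"
proof -
  have key: "\<And>x s a. (\<Sum>s'\<in>UNIV. P s a s' * (x s' + d s')) =
      (\<Sum>s'\<in>UNIV. P s a s' * x s') + (\<Sum>s'\<in>UNIV. P s a s' * d s')"
    by (simp add: distrib_left sum.distrib)
  have H: "\<And>l s a. i \<le> l \<Longrightarrow> l < j \<Longrightarrow>
     rb s a - nu l s + \<gamma> * (\<Sum>s'\<in>UNIV. P s a s' * (if Suc l = j then nuo else nu (Suc l)) s') = ln (\<pi> l s a)"
    using assms unfolding Rinv_def bellman_res_def by auto
  show ?thesis unfolding Rinv_def bellman_res_def
  proof (clarify)
    fix l s a assume l: "i \<le> l" "l < j"
    have e: "(if Suc l = j then (\<lambda>s. nuo s + d s) else (\<lambda>s. nu (Suc l) s + d s)) =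
        (\<lambda>s. (if Suc l = j then nuo else nu (Suc l)) s + d s)" by auto
    show "rb s a + d s - \<gamma> * (\<Sum>s'\<in>UNIV. P s a s' * d s') - (nu l s + d s) +
       \<gamma> * (\<Sum>s'\<in>UNIV. P s a s' * (if Suc l = j then (\<lambda>s. nuo s + d s) else (\<lambda>s. nu (Suc l) s + d s)) s') =
       ln (\<pi> l s a)"
      unfolding e key using H[OF l, of s a] by (simp add: algebra_simps)
  qed
qed

lemma Rinv_ne_iff: "Rinv P \<gamma> \<pi> i j nuo \<noteq> {} \<longleftrightarrow> NN P \<gamma> \<pi> i j"
proof -
  have *: "Rinv P \<gamma> \<pi> i j n1 \<noteq> {} \<Longrightarrow> Rinv P \<gamma> \<pi> i j n2 \<noteq> {}" for n1 n2
  proof -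
    assume "Rinv P \<gamma> \<pi> i j n1 \<noteq> {}"
    then obtain rb nu where "(rb, nu) \<in> Rinv P \<gamma> \<pi> i j n1" by auto
    from Rinv_shift[OF this, of "\<lambda>s. n2 s - n1 s"] show ?thesis by auto
  qed
  show ?thesis unfolding NN_def using *[of nuo "\<lambda>_. 0"] *[of "\<lambda>_. 0" nuo] by blast
qed

lemma NN_mono: "NN P \<gamma> \<pi> i j \<Longrightarrow> i \<le> i' \<Longrightarrow> NN P \<gamma> \<pi> i' j"
proof -
  assume a: "NN P \<gamma> \<pi> i j" "i \<le> i'"
  then obtain x where "x \<in> Rinv P \<gamma> \<pi> i j (\<lambda>_. 0)" unfolding NN_def by auto
  then have "x \<in> Rinv P \<gamma> \<pi> i' j (\<lambda>_. 0)" using a(2) unfolding Rinv_def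
    by (cases x) (simp only: mem_Collect_eq case_prod_conv, meson le_trans)
  then show ?thesis unfolding NN_def by auto
qed

lemma NN_upper:
  assumes "NN P \<gamma> \<pi> i j" "i < j'" "j' \<le> j"
  shows "NN P \<gamma> \<pi> i j'"
proof -
  obtain rb nu where h: "(rb, nu) \<in> Rinv P \<gamma> \<pi> i j (\<lambda>_. 0)" using assms(1) unfolding NN_def by auto
  have "(rb, nu) \<in> Rinv P \<gamma> \<pi> i j' (if j' = j then (\<lambda>_. 0) else nu j')"
    unfolding Rinv_def
  proof (clarify)
    fix l s a assume l: "i \<le> l" "l < j'"
    have "bellman_res P \<gamma> rb (nu l) (if Suc l = j then (\<lambda>_. 0) else nu (Suc l)) s a = ln (\<pi> l s a)"
      using h l assms(3) unfolding Rinv_def by auto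
    moreover have "(if Suc l = j' then (if j' = j then (\<lambda>_. 0) else nu j') else nu (Suc l))
       = (if Suc l = j then (\<lambda>_. 0) else nu (Suc l))" using l assms(3) by auto
    ultimately show "bellman_res P \<gamma> rb (nu l) (if Suc l = j' then (if j' = j then (\<lambda>_. 0) else nu j') else nu (Suc l)) s a = ln (\<pi> l s a)"
      by simp
  qed
  then show ?thesis using Rinv_ne_iff by blast
qed

lemma NN_Suc: "Suc i = j \<Longrightarrow> NN P \<gamma> \<pi> i j"
proof -
  assume j: "Suc i = j"
  have "(\<lambda>s a. ln (\<pi> i s a), \<lambda>_ _. 0) \<in> Rinv P \<gamma> \<pi> i j (\<lambda>_. 0)"
    unfolding Rinv_def bellman_res_def
  proof (clarify)
    fix l s a assume "i \<le> l" "l < j"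
    then have "l = i" using j by auto
    then show "ln (\<pi> i s a) - 0 + \<gamma> * (\<Sum>s'\<in>UNIV. P s a s' * (if Suc l = j then (\<lambda>_. 0) else (\<lambda>_. 0)) s') = ln (\<pi> l s a)"
      by simp
  qed
  then show ?thesis unfolding NN_def by blast
qed

definition ttf :: "nat \<Rightarrow> nat list \<Rightarrow> nat \<Rightarrow> nat" where
  "ttf T Z i = (if i = 0 then T else Z ! (length Z - i))"

lemma ttf_cons_old: "i \<le> length Z \<Longrightarrow> ttf T (u # Z) i = ttf T Z i"
  unfolding ttf_def by (auto simp: Suc_diff_le)

lemma ttf_cons_new: "ttf T (u # Z) (Suc (length Z)) = u"
  unfolding ttf_def by auto

definition ginv where
  "ginv P \<gamma> \<pi> T st \<longleftrightarrow>
   -1 \<le> gl st \<and> gl st \<le> gj st \<and> gj st < int (gu st) \<and> gu st \<le> gtau st \<and> 1 \<le> gtau st \<and>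
   (gu st < gtau st \<longrightarrow> NN P \<gamma> \<pi> (gu st) (gtau st)) \<and>
   (\<forall>j'. int j' \<le> gl st \<longrightarrow> \<not> NN P \<gamma> \<pi> j' (gtau st)) \<and>
   gtau st = ttf T (gZ st) (length (gZ st)) \<and>
   (\<forall>i < length (gZ st). ttf T (gZ st) (Suc i) < ttf T (gZ st) i \<and>
      NN P \<gamma> \<pi> (ttf T (gZ st) (Suc i)) (ttf T (gZ st) i) \<and>
      (\<forall>j < ttf T (gZ st) (Suc i). \<not> NN P \<gamma> \<pi> j (ttf T (gZ st) i)))"

lemma ginv_init: "1 \<le> T \<Longrightarrow> ginv P \<gamma> \<pi> T (gip_init T)"
  unfolding ginv_def gip_init_def ttf_def by auto

lemma ginv_step:
  assumes "gip_step P \<gamma> \<pi> st st'" "ginv P \<gamma> \<pi> T st"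
  shows "ginv P \<gamma> \<pi> T st'"
  using assms(1)
proof cases
  case (found rb nb)
  have N: "NN P \<gamma> \<pi> (nat (gj st)) (gtau st)"
    using found(3) Rinv_ne_iff by blast
  have lj: "gl st < gj st"
  proof (rule ccontr)
    assume "\<not> gl st < gj st"
    then have "int (nat (gj st)) \<le> gl st" using found(2) by auto
    then show False using N assms(2) unfolding ginv_def by blast
  qed
  show ?thesis using assms(2) found lj N unfolding ginv_def by auto
next
  case switch
  let ?u = "gu st" and ?tau = "gtau st"
  have nN: "\<not> NN P \<gamma> \<pi> (nat (gj st)) ?tau"
    using switch(3) Rinv_ne_iff by blast
  have un: "?u = Suc (nat (gj st))" using switch(2,4) by auto
  have ult: "?u < ?tau"
  proof (rule ccontr)
    assume "\<not> ?u < ?tau"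
    then have "?u = ?tau" using assms(2) unfolding ginv_def by auto
    then show False using nN NN_Suc un by metis
  qed
  have Nu: "NN P \<gamma> \<pi> ?u ?tau" using ult assms(2) unfolding ginv_def by auto
  have below: "\<forall>j < ?u. \<not> NN P \<gamma> \<pi> j ?tau"
    using nN NN_mono un less_Suc_eq_le by metis
  have I: "ginv P \<gamma> \<pi> T st" by fact
  have tau_eq: "?tau = ttf T (gZ st) (length (gZ st))" using I unfolding ginv_def by blast
  have chain: "\<forall>i < length (gZ st). ttf T (gZ st) (Suc i) < ttf T (gZ st) i \<and>
      NN P \<gamma> \<pi> (ttf T (gZ st) (Suc i)) (ttf T (gZ st) i) \<and>
      (\<forall>j < ttf T (gZ st) (Suc i). \<not> NN P \<gamma> \<pi> j (ttf T (gZ st) i))"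
    using I unfolding ginv_def by blast
  have chain': "\<forall>i < length (?u # gZ st). ttf T (?u # gZ st) (Suc i) < ttf T (?u # gZ st) i \<and>
      NN P \<gamma> \<pi> (ttf T (?u # gZ st) (Suc i)) (ttf T (?u # gZ st) i) \<and>
      (\<forall>j < ttf T (?u # gZ st) (Suc i). \<not> NN P \<gamma> \<pi> j (ttf T (?u # gZ st) i))"
  proof (intro allI impI)
    fix i assume "i < length (?u # gZ st)"
    then consider "i < length (gZ st)" | "i = length (gZ st)" by fastforce
    then show "ttf T (?u # gZ st) (Suc i) < ttf T (?u # gZ st) i \<and>
      NN P \<gamma> \<pi> (ttf T (?u # gZ st) (Suc i)) (ttf T (?u # gZ st) i) \<and>
      (\<forall>j < ttf T (?u # gZ st) (Suc i). \<not> NN P \<gamma> \<pi> j (ttf T (?u # gZ st) i))"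
    proof cases
      case 1
      then show ?thesis using chain ttf_cons_old[of i "gZ st"] ttf_cons_old[of "Suc i" "gZ st"] by auto
    next
      case 2
      then show ?thesis using ttf_cons_new[of T ?u "gZ st"] ttf_cons_old[of i "gZ st"] tau_eq ult Nu below
        by auto
    qed
  qed
  show ?thesis using switch(1) chain' ttf_cons_new[of T ?u "gZ st"] un
    unfolding ginv_def by auto
next
  case noswitch
  have nN: "\<not> NN P \<gamma> \<pi> (nat (gj st)) (gtau st)"
    using noswitch(3) Rinv_ne_iff by blast
  have below: "\<forall>j'. int j' \<le> gj st \<longrightarrow> \<not> NN P \<gamma> \<pi> j' (gtau st)"
  proof (intro allI impI notI)
    fix j' assume "int j' \<le> gj st" "NN P \<gamma> \<pi> j' (gtau st)"
    then have "NN P \<gamma> \<pi> (nat (gj st)) (gtau st)" using NN_mono[of P \<gamma> \<pi> j' "gtau st" "nat (gj st)"] by linarith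
    then show False using nN by blast
  qed
  show ?thesis using assms(2) noswitch below unfolding ginv_def by auto
qed

lemma ginv_reach:
  assumes "(gip_step P \<gamma> \<pi>)\<^sup>*\<^sup>* (gip_init T) st" "1 \<le> T"
  shows "ginv P \<gamma> \<pi> T st"
  using assms(1)
proof (induction rule: rtranclp_induct)
  case base
  then show ?case using ginv_init assms(2) by blast
next
  case (step y z)
  then show ?case using ginv_step by blast
qed

lemma feasible_NN:
  assumes F: "feasible_switch P \<gamma> T \<pi> k' t'" and i: "i \<le> k'"
    and e: "e = (\<lambda>i. if i = 0 then T else if i = Suc k' then 0 else t' i)"
  shows "NN P \<gamma> \<pi> (e (Suc i)) (e i)"
proof -
  have rng: "\<forall>i\<in>{1..k'}. 0 < t' i \<and> t' i < T" using F unfolding feasible_switch_def by blast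
  obtain r \<nu> where RE: "(r, \<nu>) \<in> RE P \<gamma> T \<pi>"
    and C: "\<forall>i\<le>k'. \<forall>t s. e (Suc i) \<le> t \<and> t < e i \<and> e (Suc i) \<le> s \<and> s < e i \<longrightarrow> r t = r s"
    using F unfolding feasible_switch_def Let_def e by blast
  have eT: "e i \<le> T" using rng i unfolding e by (auto simp: less_imp_le)
  have bell: "\<forall>t<T. \<forall>s a. bellman_res P \<gamma> (r t) (\<nu> t) (\<nu> (Suc t)) s a = ln (\<pi> t s a)"
    using RE unfolding RE_def by blast
  have "(r (e (Suc i)), \<nu>) \<in> Rinv P \<gamma> \<pi> (e (Suc i)) (e i) (\<nu> (e i))"
    unfolding Rinv_def
  proof (clarify)
    fix l s a assume l: "e (Suc i) \<le> l" "l < e i"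
    have "r l = r (e (Suc i))" using C i l by (meson le_less_trans order_refl)
    moreover have "(if Suc l = e i then \<nu> (e i) else \<nu> (Suc l)) = \<nu> (Suc l)" by auto
    moreover have "l < T" using l eT by linarith
    ultimately show "bellman_res P \<gamma> (r (e (Suc i))) (\<nu> l) (if Suc l = e i then \<nu> (e i) else \<nu> (Suc l)) s a = ln (\<pi> l s a)"
      using bell by metis
  qed
  then show ?thesis using Rinv_ne_iff by blast
qed

theorem lemma3:
  fixes P :: "'s::finite \<Rightarrow> 'a::finite \<Rightarrow> 's \<Rightarrow> real"
    and \<gamma> :: real and T :: nat and \<pi> :: "nat \<Rightarrow> 's \<Rightarrow> 'a \<Rightarrow> real"
    and Z :: "nat list" and k' :: nat and t' :: "nat \<Rightarrow> nat"
  assumes "\<forall>s a s'. 0 \<le> P s a s'"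
    and "\<forall>s a. (\<Sum>s'\<in>UNIV. P s a s') = 1"
    and "0 \<le> \<gamma>" and "\<gamma> \<le> 1" and "1 \<le> T"
    and "\<forall>t<T. \<forall>s a. 0 < \<pi> t s a \<and> \<pi> t s a \<le> 1"
    and "\<forall>t<T. \<forall>s. (\<Sum>a\<in>UNIV. \<pi> t s a) = 1"
    and "gip_output P \<gamma> T \<pi> Z"
    and "feasible_switch P \<gamma> T \<pi> k' t'"
  shows "\<forall>i. 1 \<le> i \<and> i \<le> min (length Z) k' \<longrightarrow> Z ! (length Z - i) \<le> t' i"
proof -
  obtain st where R: "(gip_step P \<gamma> \<pi>)\<^sup>*\<^sup>* (gip_init T) st" and Zst: "Z = gZ st"
    using assms(8) unfolding gip_output_def by blast
  have I: "ginv P \<gamma> \<pi> T st" using ginv_reach[OF R assms(5)] .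
  have chain: "\<forall>i < length Z. ttf T Z (Suc i) < ttf T Z i \<and>
      NN P \<gamma> \<pi> (ttf T Z (Suc i)) (ttf T Z i) \<and>
      (\<forall>j < ttf T Z (Suc i). \<not> NN P \<gamma> \<pi> j (ttf T Z i))"
    using I Zst unfolding ginv_def by blast
  define e where "e = (\<lambda>i. if i = 0 then T else if i = Suc k' then 0 else t' i)"
  have main: "i \<le> min (length Z) k' \<Longrightarrow> ttf T Z i \<le> e i" for i
  proof (induction i)
    case 0
    then show ?case unfolding ttf_def e_def by simp
  next
    case (Suc i)
    then have IH: "ttf T Z i \<le> e i" and il: "i < length Z" and ik: "i < k'" by auto
    have N: "NN P \<gamma> \<pi> (e (Suc i)) (e i)" using feasible_NN[OF assms(9) _ e_def] ik by simp
    have c: "ttf T Z (Suc i) < ttf T Z i" "\<forall>j < ttf T Z (Suc i). \<not> NN P \<gamma> \<pi> j (ttf T Z i)"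
      using chain il by auto
    show ?case
    proof (cases "e (Suc i) < ttf T Z i")
      case True
      have "NN P \<gamma> \<pi> (e (Suc i)) (ttf T Z i)" using NN_upper[OF N True IH] .
      then show ?thesis using c(2) by (meson not_less)
    next
      case False
      then show ?thesis using c(1) by simp
    qed
  qed
  show ?thesis
  proof (intro allI impI)
    fix i assume h: "1 \<le> i \<and> i \<le> min (length Z) k'"
    have "ttf T Z i \<le> e i" using main h by blast
    then show "Z ! (length Z - i) \<le> t' i" using h unfolding ttf_def e_def by auto
  qed
qed

end
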